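(* Let $n\ge 1$ and $\pi\in S_n$. Then $\pi\in\mathcal C_n(321)$ if and only if $\hat\pi_1=n$ and $\hat\pi$ avoids each of the five vincular patterns $\underline{32}\,\underline{41}$, $\underline{14}\,\underline{23}$, $\underline{41}\,\underline{32}$, $\underline{23}\,\underline{14}$, $\underline{23}\,\underline{1}$. Equivalently, $$\mathcal C_n(321)=\theta^{-1}\big(S_{n,n}(\underline{32}\,\underline{41},\ \underline{14}\,\underline{23},\ \underline{41}\,\underline{32},\ \underline{23}\,\underline{14},\ \underline{23}\,\underline{1})\big),$$ where $S_{n,n}(\dots)$ is the set of permutations $w\in S_n$ with $w_1=n$ avoiding all listed patterns.
   Context: Permutations of $[n]=\{1,\dots,n\}$ are written in one-line notation $\pi=\pi_1\cdots\pi_n$ with $\pi_i=\pi(i)$. A permutation contains $321$ if there are $i<j<k$ with $\pi_i>\pi_j>\pi_k$, and avoids $321$ otherwise. $\mathcal C_n$ is the set of cyclic permutations of $[n]$ (cycle decomposition is a single $n$-cycle), and $\mathcal C_n(321)$ is the set of those avoiding $321$. The standard cycle notation of $\pi$ writes each cycle with its largest element first, as $(m,\pi(m),\pi^2(m),\dots)$, and lists the cycles in increasing order of their largest elements. The fundamental bijection $\theta:S_n\to S_n$ sends $\pi$ to the permutation whose one-line notation is obtained by erasing the parentheses from the standard cycle notation of $\pi$; write $\hat\pi=\theta(\pi)$. (Example: $\pi=964572813=(6,2)(9,3,4,5,7,8,1)$, so $\hat\pi=629345781$.) Vincular patterns: for a sequence $w=w_1\cdots w_N$ of distinct integers, - $w$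 contains $\underline{32}\,\underline{41}$ if there are $i,j$ with $i+2\le j\le N-1$ and $w_{j+1}<w_{i+1}<w_i<w_j$; - $w$ contains $\underline{14}\,\underline{23}$ if there are such $i,j$ with $w_i<w_j<w_{j+1}<w_{i+1}$; - $w$ contains $\underline{41}\,\underline{32}$ if there are such $i,j$ with $w_{i+1}<w_{j+1}<w_j<w_i$; - $w$ contains $\underline{23}\,\underline{14}$ if there are such $i,j$ with $w_j<w_i<w_{i+1}<w_{j+1}$; - $w$ contains $\underline{23}\,\underline{1}$ if there is $i$ with $i+1\le N-1$ and $w_N<w_i<w_{i+1}$ (the "1" must be the last entry); - $w$ contains $\underline{1}\,\underline{32}$ if there is $j$ with $2\le j\le N-1$ and $w_1<w_{j+1}<w_j$ (the "1" must be the first entry). $w$ avoids a pattern if it does not contain it. *)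

theory Defs
  imports "HOL-Combinatorics.Permutations"
begin

(* Permutations of [n] = {1..n} are functions p :: nat => nat with p permutes {1..n}. *)

definition contains_321 :: "nat \<Rightarrow> (nat \<Rightarrow> nat) \<Rightarrow> bool" where
  "contains_321 n p \<longleftrightarrow> (\<exists>i j k. 1 \<le> i \<and> i < j \<and> j < k \<and> k \<le> n \<and> p i > p j \<and> p j > p k)"

definition is_cyclic :: "nat \<Rightarrow> (nat \<Rightarrow> nat) \<Rightarrow> bool" where
  "is_cyclic n p \<longleftrightarrow> (\<forall>x\<in>{1..n}. \<exists>k. (p ^^ k) 1 = x)"

definition cyc_len :: "(nat \<Rightarrow> nat) \<Rightarrow> nat \<Rightarrow> nat" where
  "cyc_len p m = (LEAST k. 0 < k \<and> (p ^^ k) m = m)"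

definition cyc_max :: "(nat \<Rightarrow> nat) \<Rightarrow> nat \<Rightarrow> bool" where
  "cyc_max p m \<longleftrightarrow> (\<forall>k. (p ^^ k) m \<le> m)"

definition cycle_word :: "(nat \<Rightarrow> nat) \<Rightarrow> nat \<Rightarrow> nat list" where
  "cycle_word p m = map (\<lambda>k. (p ^^ k) m) [0..<cyc_len p m]"

(* fundamental bijection: erase parentheses of the standard cycle notation *)
definition theta :: "nat \<Rightarrow> (nat \<Rightarrow> nat) \<Rightarrow> nat list" where
  "theta n p = concat (map (cycle_word p) (filter (cyc_max p) [1..<Suc n]))"

(* vincular patterns on words, 0-indexed lists; with 1-indexed positions i,j of the paper
   we use i' = i-1, j' = j-1, so i+2<=j<=N-1 becomes i'+2<=j' and j'+1 < N *)
definition contains_3241 :: "nat list \<Rightarrow> bool" where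
  "contains_3241 w \<longleftrightarrow> (\<exists>i j. i + 2 \<le> j \<and> j + 1 < length w \<and>
      w!(j+1) < w!(i+1) \<and> w!(i+1) < w!i \<and> w!i < w!j)"

definition contains_1423 :: "nat list \<Rightarrow> bool" where
  "contains_1423 w \<longleftrightarrow> (\<exists>i j. i + 2 \<le> j \<and> j + 1 < length w \<and>
      w!i < w!j \<and> w!j < w!(j+1) \<and> w!(j+1) < w!(i+1))"

definition contains_4132 :: "nat list \<Rightarrow> bool" where
  "contains_4132 w \<longleftrightarrow> (\<exists>i j. i + 2 \<le> j \<and> j + 1 < length w \<and>
      w!(i+1) < w!(j+1) \<and> w!(j+1) < w!j \<and> w!j < w!i)"

definition contains_2314 :: "nat list \<Rightarrow> bool" where
  "contains_2314 w \<longleftrightarrow> (\<exists>i j. i + 2 \<le> j \<and> j + 1 < length w \<and>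
      w!j < w!i \<and> w!i < w!(i+1) \<and> w!(i+1) < w!(j+1))"

(* 23-1 with the 1 the last entry: 1-indexed i+1 <= N-1 becomes 0-indexed i+2 < N *)
definition contains_231_end :: "nat list \<Rightarrow> bool" where
  "contains_231_end w \<longleftrightarrow> (\<exists>i. i + 2 < length w \<and>
      w!(length w - 1) < w!i \<and> w!i < w!(i+1))"

end

theory Submission imports Defs "HOL-Combinatorics.Cycles"
begin

lemma lemA:
  fixes p :: "nat \<Rightarrow> nat"
  assumes p: "p permutes {1..n}" and y: "y \<in> {1..n}" and e: "y < p y"
  shows "\<exists>k. y < k \<and> k \<le> n \<and> p k \<le> y"
proof (rule ccontr)
  assume "\<not> ?thesis"
  hence h: "\<forall>k. y < k \<and> k \<le> n \<longrightarrow> y < p k" by (auto simp add: not_le)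
  have inj: "inj p" using permutes_inj[OF p] .
  have sub: "p ` {Suc y..n} \<subseteq> {Suc y..n}"
  proof
    fix z assume "z \<in> p ` {Suc y..n}"
    then obtain k where k: "k \<in> {Suc y..n}" "z = p k" by auto
    have "k \<in> {1..n}" using k by auto
    hence "p k \<in> {1..n}" using permutes_in_image[OF p] by auto
    thus "z \<in> {Suc y..n}" using h k by (auto simp: Suc_le_eq)
  qed
  have "card (p ` {Suc y..n}) = card {Suc y..n}"
    by (rule card_image) (use inj in \<open>auto intro: inj_on_subset\<close>)
  hence eq: "p ` {Suc y..n} = {Suc y..n}" using card_subset_eq[OF _ sub] by auto
  have "p y \<in> {1..n}" using y permutes_in_image[OF p] by auto
  hence "p y \<in> {Suc y..n}" using e by auto
  then obtain k where "k \<in> {Suc y..n}" "p y = p k" using eq by (metis imageE)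
  thus False using inj by (metis atLeastAtMost_iff injD not_less_eq_eq order.refl)
qed

lemma lemB:
  fixes p :: "nat \<Rightarrow> nat"
  assumes p: "p permutes {1..n}" and x: "x \<in> {1..n}" and e: "p x < x"
  shows "\<exists>k. 1 \<le> k \<and> k < x \<and> x \<le> p k"
proof (rule ccontr)
  assume "\<not> ?thesis"
  hence h: "\<forall>k. 1 \<le> k \<and> k < x \<longrightarrow> p k < x" by (auto simp add: not_le)
  have inj: "inj p" using permutes_inj[OF p] .
  have sub: "p ` {1..<x} \<subseteq> {1..<x}"
  proof
    fix z assume "z \<in> p ` {1..<x}"
    then obtain k where k: "k \<in> {1..<x}" "z = p k" by auto
    have "k \<in> {1..n}" using k x by auto
    hence "p k \<in> {1..n}" using permutes_in_image[OF p] by auto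
    thus "z \<in> {1..<x}" using h k by auto
  qed
  have "card (p ` {1..<x}) = card {1..<x}"
    by (rule card_image) (use inj in \<open>auto intro: inj_on_subset\<close>)
  hence eq: "p ` {1..<x} = {1..<x}" using card_subset_eq[OF _ sub] by auto
  have "p x \<in> {1..n}" using x permutes_in_image[OF p] by auto
  hence "p x \<in> {1..<x}" using e by auto
  then obtain k where "k \<in> {1..<x}" "p x = p k" using eq by (metis imageE)
  thus False using inj by (metis atLeastLessThan_iff injD less_irrefl)
qed

lemma exc_inv:
  fixes p :: "nat \<Rightarrow> nat"
  assumes p: "p permutes {1..n}" and "1 \<le> x" "x < y" "y \<le> n" "y < p y" "p y < p x"
  shows "contains_321 n p"
proof -
  obtain k where "y < k" "k \<le> n" "p k \<le> y" using lemA[OF p, of y] assms by auto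
  thus ?thesis unfolding contains_321_def using assms
    by (intro exI[of _ x] exI[of _ y] exI[of _ k]) auto
qed

lemma def_inv:
  fixes p :: "nat \<Rightarrow> nat"
  assumes p: "p permutes {1..n}" and "1 \<le> x" "x < y" "y \<le> n" "p x < x" "p y < p x"
  shows "contains_321 n p"
proof -
  obtain k where "1 \<le> k" "k < x" "x \<le> p k" using lemB[OF p, of x] assms by auto
  thus ?thesis unfolding contains_321_def using assms
    by (intro exI[of _ k] exI[of _ x] exI[of _ y]) auto
qed

lemma inv_of_321:
  fixes p :: "nat \<Rightarrow> nat"
  assumes "contains_321 n p" "\<forall>j\<in>{1..n}. p j \<noteq> j"
  shows "(\<exists>x y. 1 \<le> x \<and> x < y \<and> y \<le> n \<and> x < p x \<and> y < p y \<and> p y < p x) \<or>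
         (\<exists>x y. 1 \<le> x \<and> x < y \<and> y \<le> n \<and> p x < x \<and> p y < y \<and> p y < p x)"
proof -
  obtain i j k where h: "1 \<le> i" "i < j" "j < k" "k \<le> n" "p i > p j" "p j > p k"
    using assms(1) unfolding contains_321_def by blast
  have "p j \<noteq> j" using assms(2) h by auto
  show ?thesis
  proof (cases "p j > j")
    case True
    thus ?thesis using h by (intro disjI1 exI[of _ i] exI[of _ j]) auto
  next
    case False
    thus ?thesis using h \<open>p j \<noteq> j\<close> by (intro disjI2 exI[of _ j] exI[of _ k]) auto
  qed
qed

lemma period:
  fixes p :: "nat \<Rightarrow> nat"
  assumes p: "p permutes {1..n}"
  obtains c where "c > 0" "p ^^ c = id"
proof -
  have "permutation p" using p permutation_permutes by blast
  thus ?thesis using permutation_is_nilpotent that by blast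
qed

lemma back_id:
  fixes p :: "nat \<Rightarrow> nat"
  assumes "p ^^ c = id" "c > 0"
  shows "(p ^^ (c * a - a)) ((p ^^ a) x) = x"
proof -
  have "c * a \<ge> a" using assms(2) by simp
  hence "(p ^^ (c * a - a)) ((p ^^ a) x) = (p ^^ (c * a)) x"
    by (metis funpow_add le_add_diff_inverse2 o_apply)
  also have "\<dots> = ((p ^^ c) ^^ a) x" by (simp add: funpow_mult)
  also have "\<dots> = x" using assms(1) by simp
  finally show ?thesis .
qed

lemma cyc_len_pos:
  fixes p :: "nat \<Rightarrow> nat"
  assumes p: "p permutes {1..n}"
  shows "0 < cyc_len p m \<and> (p ^^ cyc_len p m) m = m"
proof -
  obtain c where c: "c > 0" "p ^^ c = id" using period[OF p] by blast
  have "0 < c \<and> (p ^^ c) m = m" using c by simp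
  thus ?thesis unfolding cyc_len_def by (rule LeastI)
qed

lemma cyc_facts:
  fixes p :: "nat \<Rightarrow> nat"
  assumes p: "p permutes {1..n}" and n: "n \<ge> 1" and cyc: "is_cyclic n p"
  shows "cyc_len p n = n \<and> inj_on (\<lambda>k. (p ^^ k) n) {..<n} \<and> (\<lambda>k. (p ^^ k) n) ` {..<n} = {1..n}"
proof -
  define f where "f = (\<lambda>k. (p ^^ k) n)"
  define L where "L = cyc_len p n"
  obtain c where c: "c > 0" "p ^^ c = id" using period[OF p] by blast
  have Lex: "0 < L" "(p ^^ L) n = n" using cyc_len_pos[OF p] L_def by auto
  have Lmin: "(p ^^ k) n \<noteq> n" if "0 < k" "k < L" for k
    using not_less_Least[of k "\<lambda>k. 0 < k \<and> (p ^^ k) n = n"] that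
    unfolding L_def cyc_len_def by auto
  have inj: "inj_on f {..<L}"
  proof (rule inj_onI, rule ccontr)
    fix i j assume ij: "i \<in> {..<L}" "j \<in> {..<L}" "f i = f j" "i \<noteq> j"
    have key: False if "i < j" "j < L" "f i = f j" for i j
    proof -
      have "(p ^^ i) ((p ^^ (j - i)) n) = (p ^^ j) n"
        using that by (metis funpow_add le_add_diff_inverse less_imp_le o_apply)
      also have "\<dots> = (p ^^ i) n" using that f_def by simp
      finally have "(p ^^ (j - i)) n = n"
        using inj_fn[OF permutes_inj[OF p], of i] by (simp add: inj_eq)
      thus False using Lmin[of "j - i"] that by auto
    qed
    show False using ij key[of i j] key[of j i] by (cases "i < j") auto
  qed
  have sub: "f ` {..<L} \<subseteq> {1..n}"
    using permutes_in_funpow_image[OF p] n f_def by auto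
  have sup: "{1..n} \<subseteq> f ` {..<L}"
  proof
    fix x assume x: "x \<in> {1..n}"
    obtain a where a: "(p ^^ a) 1 = n" using cyc n unfolding is_cyclic_def by (meson atLeastAtMost_iff order_refl)
    obtain b where b: "(p ^^ b) 1 = x" using cyc x unfolding is_cyclic_def by blast
    have "(p ^^ (c * a - a)) n = 1" using back_id[OF c(2) c(1), of a 1] a by simp
    hence "(p ^^ b) ((p ^^ (c * a - a)) n) = x" using b by simp
    hence "(p ^^ (b + (c * a - a))) n = x" by (simp add: funpow_add)
    hence "(p ^^ ((b + (c * a - a)) mod L)) n = x" using funpow_mod_eq[where f=p and n=L and x=n] Lex by simp
    moreover have "(b + (c * a - a)) mod L < L" using Lex by simp
    ultimately show "x \<in> f ` {..<L}" unfolding f_def by blast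
  qed
  have img: "f ` {..<L} = {1..n}" using sub sup by blast
  have "L = n" using card_image[OF inj] img by simp
  thus ?thesis using img inj f_def L_def by simp
qed


lemma theta_cyc:
  fixes p :: "nat \<Rightarrow> nat"
  assumes p: "p permutes {1..n}" and n: "n \<ge> 1" and cyc: "is_cyclic n p"
  shows "theta n p = map (\<lambda>k. (p ^^ k) n) [0..<n]"
proof -
  note cfa = cyc_facts[OF p n cyc]
  note cf = cfa[THEN conjunct1] cfa[THEN conjunct2, THEN conjunct1] cfa[THEN conjunct2, THEN conjunct2]
  have pn: "(p ^^ n) n = n" using cyc_len_pos[OF p, of n] cf(1) by simp
  have nm: "\<not> cyc_max p m" if "m \<in> set [1..<n]" for m
  proof -
    have "m \<in> {1..n}" using that by auto
    hence "m \<in> (\<lambda>k. (p ^^ k) n) ` {..<n}" using cf(3) by simp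
    then obtain a where a0: "a \<in> {..<n}" "m = (p ^^ a) n" by (rule imageE)
    hence a: "a < n" "(p ^^ a) n = m" by auto
    have "(p ^^ (n - a)) m = (p ^^ (n - a)) ((p ^^ a) n)" using a(2) by simp
    also have "\<dots> = (p ^^ (n - a + a)) n" by (simp only: funpow_add o_apply)
    also have "\<dots> = n" using a pn by simp
    finally have e: "(p ^^ (n - a)) m = n" .
    have "m < n" using that by simp
    hence "\<not> (p ^^ (n - a)) m \<le> m" using e by simp
    thus ?thesis unfolding cyc_max_def by blast
  qed
  have cn: "cyc_max p n" unfolding cyc_max_def
    using permutes_in_funpow_image[OF p] n by auto
  have "[1..<Suc n] = [1..<n] @ [n]" using n by simp
  hence "filter (cyc_max p) [1..<Suc n] = [n]" using nm cn by (simp add: filter_empty_conv)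
  thus ?thesis unfolding theta_def cycle_word_def using cf(1) by simp
qed

lemma theta_noncyc:
  fixes p :: "nat \<Rightarrow> nat"
  assumes p: "p permutes {1..n}" and n: "n \<ge> 1" and ncyc: "\<not> is_cyclic n p"
  shows "theta n p ! 0 \<noteq> n"
proof -
  obtain c where c: "c > 0" "p ^^ c = id" using period[OF p] by blast
  obtain x where x: "x \<in> {1..n}" "\<forall>k. (p ^^ k) 1 \<noteq> x" using ncyc unfolding is_cyclic_def by blast
  obtain z where z: "z \<in> {1..n}" "\<forall>k. (p ^^ k) z \<noteq> n"
  proof (cases "\<exists>a. (p ^^ a) 1 = n")
    case True
    then obtain a where a: "(p ^^ a) 1 = n" by blast
    have "\<forall>k. (p ^^ k) x \<noteq> n"
    proof (intro allI notI)
      fix j assume j: "(p ^^ j) x = n"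
      have "(p ^^ (c * j - j)) n = x" using back_id[OF c(2) c(1), of j x] j by simp
      hence "(p ^^ (c * j - j + a)) 1 = x" using a by (simp add: funpow_add)
      thus False using x by blast
    qed
    thus ?thesis using that x by blast
  next
    case False
    thus ?thesis using that n by auto
  qed
  define Orb where "Orb = (\<lambda>k. (p ^^ k) z) ` {..<c}"
  define m where "m = Max Orb"
  have Ofin: "finite Orb" "Orb \<noteq> {}" using c Orb_def by auto
  have "m \<in> Orb" using Ofin m_def by simp
  then obtain j where j: "j < c" "m = (p ^^ j) z" using Orb_def by auto
  have zc: "(p ^^ c) z = z" using c by simp
  have cm: "cyc_max p m" unfolding cyc_max_def
  proof
    fix k
    have "(p ^^ k) m = (p ^^ (k + j)) z" using j by (simp add: funpow_add)
    also have "\<dots> = (p ^^ ((k + j) mod c)) z" using funpow_mod_eq[where f=p and n=c and x=z] zc by simp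
    finally have e: "(p ^^ k) m = (p ^^ ((k + j) mod c)) z" .
    have "(p ^^ ((k + j) mod c)) z \<in> Orb" using Orb_def c by auto
    hence "(p ^^ ((k + j) mod c)) z \<le> m" using Ofin m_def by simp
    thus "(p ^^ k) m \<le> m" using e by simp
  qed
  have m1: "m \<in> {1..n}" using j permutes_in_funpow_image[OF p z(1)] by simp
  have "m \<noteq> n" using j z(2) by blast
  hence mn: "m < n" using m1 by simp
  define xs where "xs = filter (cyc_max p) [1..<Suc n]"
  have "m \<in> set [1..<Suc n]" using m1 by (simp del: upt_Suc)
  hence mx: "m \<in> set xs" using cm unfolding xs_def by (simp del: upt_Suc)
  then obtain h t where ht: "xs = h # t" by (cases xs) auto
  have "sorted xs" unfolding xs_def using sorted_wrt_filter sorted_upt by blast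
  hence "h \<le> m" using mx ht by auto
  have "0 < cyc_len p h" using cyc_len_pos[OF p] by blast
  hence cw: "cycle_word p h ! 0 = h" "cycle_word p h \<noteq> []" unfolding cycle_word_def by auto
  have "theta n p = cycle_word p h @ concat (map (cycle_word p) t)"
    unfolding theta_def xs_def[symmetric] ht by simp
  hence "theta n p ! 0 = h" using cw by (simp add: nth_append)
  thus ?thesis using \<open>h \<le> m\<close> mn by simp
qed


lemma main_cyc:
  fixes p f :: "nat \<Rightarrow> nat" and w :: "nat list"
  assumes p: "p permutes {1..n}" and n: "n \<ge> 1"
    and fS: "\<And>k. f (Suc k) = p (f k)" and f0: "f 0 = n" and fn: "f n = n"
    and inj: "inj_on f {..<n}" and img: "f ` {..<n} = {1..n}"
    and w: "w = map f [0..<n]"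
  shows "\<not> contains_321 n p \<longleftrightarrow> (\<not> contains_3241 w \<and> \<not> contains_1423 w
          \<and> \<not> contains_4132 w \<and> \<not> contains_2314 w \<and> \<not> contains_231_end w)"
proof -
  have lw: "length w = n" using w by simp
  have wk: "\<And>k. k < n \<Longrightarrow> w ! k = f k" using w by simp
  have fr: "\<And>k. k < n \<Longrightarrow> 1 \<le> f k \<and> f k \<le> n" using img by auto
  have pf: "\<And>k. p (f k) = f (Suc k)" using fS by simp
  have finj: "\<And>i j. i < n \<Longrightarrow> j < n \<Longrightarrow> f i = f j \<Longrightarrow> i = j"
    using inj by (auto dest: inj_onD)
  have idx: "\<exists>k<n. f k = x" if "x \<in> {1..n}" for x
    using that img by (metis imageE lessThan_iff)
  have d1: "contains_321 n p" if "contains_3241 w \<or> contains_1423 w \<or> contains_4132 w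
          \<or> contains_2314 w \<or> contains_231_end w"
  proof -
    { assume "contains_3241 w"
      then obtain i j where h: "i + 2 \<le> j" "j + 1 < n" "w!(j+1) < w!(i+1)" "w!(i+1) < w!i" "w!i < w!j"
        unfolding contains_3241_def lw by blast
      have "f (Suc j) < f (Suc i)" "f (Suc i) < f i" "f i < f j" using h wk by auto
      moreover have "1 \<le> f i" "f j \<le> n" using h fr by auto
      ultimately have ?thesis using def_inv[OF p, of "f i" "f j"] pf by simp }
    moreover
    { assume "contains_1423 w"
      then obtain i j where h: "i + 2 \<le> j" "j + 1 < n" "w!i < w!j" "w!j < w!(j+1)" "w!(j+1) < w!(i+1)"
        unfolding contains_1423_def lw by blast
      have "f i < f j" "f j < f (Suc j)" "f (Suc j) < f (Suc i)" using h wk by auto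
      moreover have "1 \<le> f i" "f j \<le> n" using h fr by auto
      ultimately have ?thesis using exc_inv[OF p, of "f i" "f j"] pf by simp }
    moreover
    { assume "contains_4132 w"
      then obtain i j where h: "i + 2 \<le> j" "j + 1 < n" "w!(i+1) < w!(j+1)" "w!(j+1) < w!j" "w!j < w!i"
        unfolding contains_4132_def lw by blast
      have "f (Suc i) < f (Suc j)" "f (Suc j) < f j" "f j < f i" using h wk by auto
      moreover have "1 \<le> f j" "f i \<le> n" using h fr by auto
      ultimately have ?thesis using def_inv[OF p, of "f j" "f i"] pf by simp }
    moreover
    { assume "contains_2314 w"
      then obtain i j where h: "i + 2 \<le> j" "j + 1 < n" "w!j < w!i" "w!i < w!(i+1)" "w!(i+1) < w!(j+1)"
        unfolding contains_2314_def lw by blast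
      have "f j < f i" "f i < f (Suc i)" "f (Suc i) < f (Suc j)" using h wk by auto
      moreover have "1 \<le> f j" "f i \<le> n" using h fr by auto
      ultimately have ?thesis using exc_inv[OF p, of "f j" "f i"] pf by simp }
    moreover
    { assume "contains_231_end w"
      then obtain i where h: "i + 2 < n" "w!(n - 1) < w!i" "w!i < w!(i+1)"
        unfolding contains_231_end_def lw by blast
      have "f (n - 1) < f i" "f i < f (Suc i)" using h wk by auto
      moreover have "1 \<le> f (n - 1)" "f i \<le> n" using h fr by auto
      moreover have "p (f (n - 1)) = n" using pf[of "n - 1"] n fn by simp
      moreover have "f (Suc i) \<noteq> n" using finj[of "Suc i" 0] f0 h by auto
      moreover have "f (Suc i) \<le> n" using fr[of "Suc i"] h by auto
      ultimately have ?thesis using exc_inv[OF p, of "f (n - 1)" "f i"] pf by simp }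
    ultimately show ?thesis using that by blast
  qed
  have d2: "contains_3241 w \<or> contains_1423 w \<or> contains_4132 w
          \<or> contains_2314 w \<or> contains_231_end w" if c: "contains_321 n p"
  proof -
    have n2: "n \<ge> 2"
    proof (rule ccontr)
      assume "\<not> n \<ge> 2"
      hence "n = 1" using n by simp
      thus False using c unfolding contains_321_def by auto
    qed
    have nf: "\<forall>j\<in>{1..n}. p j \<noteq> j"
    proof
      fix j assume "j \<in> {1..n}"
      then obtain k where k: "k < n" "f k = j" using idx by blast
      show "p j \<noteq> j"
      proof
        assume "p j = j"
        hence e: "f (Suc k) = f k" using pf[of k] k(2) by metis
        show False
        proof (cases "Suc k < n")
          case True thus False using finj[of "Suc k" k] e k by simp
        next
          case False
          hence "Suc k = n" using k by simp
          hence "f k = f 0" using e fn f0 by simp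
          hence "k = 0" using finj[of k 0] k n by simp
          thus False using \<open>Suc k = n\<close> n2 by simp
        qed
      qed
    qed
    from inv_of_321[OF c nf] show ?thesis
    proof
      assume "\<exists>x y. 1 \<le> x \<and> x < y \<and> y \<le> n \<and> x < p x \<and> y < p y \<and> p y < p x"
      then obtain x y where h: "1 \<le> x" "x < y" "y \<le> n" "x < p x" "y < p y" "p y < p x" by blast
      obtain i where i: "i < n" "f i = x" using idx[of x] h by auto
      obtain j where j: "j < n" "f j = y" using idx[of y] h by auto
      have pxi: "p x = f (Suc i)" "p y = f (Suc j)" using pf i j by auto
      have "i \<noteq> j" using i j h by auto
      show ?thesis
      proof (cases "i < j")
        case True
        have "j \<noteq> Suc i" using h pxi j by auto
        moreover have "Suc j \<noteq> n" using h pxi fn fr[of "Suc i"] True j by auto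
        ultimately have "i + 2 \<le> j" "j + 1 < n" using True j by auto
        moreover have "w!i < w!j" "w!j < w!(j+1)" "w!(j+1) < w!(i+1)"
          using h wk i j pxi \<open>j + 1 < n\<close> True by auto
        ultimately have "contains_1423 w" unfolding contains_1423_def lw by blast
        thus ?thesis by blast
      next
        case False
        hence ji: "j < i" using \<open>i \<noteq> j\<close> by simp
        have "i \<noteq> Suc j" using h pxi i by auto
        show ?thesis
        proof (cases "Suc i = n")
          case True
          have "j + 2 < n" using ji \<open>i \<noteq> Suc j\<close> True by auto
          moreover have "w!(n - 1) < w!j" "w!j < w!(j+1)"
            using h wk i j pxi True ji by auto
          ultimately have "contains_231_end w" unfolding contains_231_end_def lw by blast
          thus ?thesis by blast
        next
          case False
          have "j + 2 \<le> i" "i + 1 < n" using ji \<open>i \<noteq> Suc j\<close> False i by auto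
          moreover have "w!i < w!j" "w!j < w!(j+1)" "w!(j+1) < w!(i+1)"
            using h wk i j pxi \<open>i + 1 < n\<close> ji by auto
          ultimately have "contains_2314 w" unfolding contains_2314_def lw by blast
          thus ?thesis by blast
        qed
      qed
    next
      assume "\<exists>x y. 1 \<le> x \<and> x < y \<and> y \<le> n \<and> p x < x \<and> p y < y \<and> p y < p x"
      then obtain x y where h: "1 \<le> x" "x < y" "y \<le> n" "p x < x" "p y < y" "p y < p x" by blast
      obtain i where i: "i < n" "f i = x" using idx[of x] h by auto
      obtain j where j: "j < n" "f j = y" using idx[of y] h by auto
      have pxi: "p x = f (Suc i)" "p y = f (Suc j)" using pf i j by auto
      have "i \<noteq> j" using i j h by auto
      show ?thesis
      proof (cases "i < j")
        case True
        have "j \<noteq> Suc i" using h pxi j by auto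
        moreover have "Suc j \<noteq> n" using h pxi fn by auto
        ultimately have "i + 2 \<le> j" "j + 1 < n" using True j by auto
        moreover have "w!(j+1) < w!(i+1)" "w!(i+1) < w!i" "w!i < w!j"
          using h wk i j pxi \<open>j + 1 < n\<close> True by auto
        ultimately have "contains_3241 w" unfolding contains_3241_def lw by blast
        thus ?thesis by blast
      next
        case False
        hence ji: "j < i" using \<open>i \<noteq> j\<close> by simp
        have "i \<noteq> Suc j" using h pxi i by auto
        moreover have "Suc i \<noteq> n" using h pxi fn by auto
        ultimately have "j + 2 \<le> i" "i + 1 < n" using ji i by auto
        moreover have "w!(j+1) < w!(i+1)" "w!(i+1) < w!i" "w!i < w!j"
          using h wk i j pxi \<open>i + 1 < n\<close> ji by auto
        ultimately have "contains_4132 w" unfolding contains_4132_def lw by blast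
        thus ?thesis by blast
      qed
    qed
  qed
  show ?thesis using d1 d2 by blast
qed

theorem mainTheorem1:
  fixes n :: nat and p :: "nat \<Rightarrow> nat"
  assumes "n \<ge> 1" and "p permutes {1..n}"
  shows "(is_cyclic n p \<and> \<not> contains_321 n p) \<longleftrightarrow>
         (theta n p ! 0 = n \<and> \<not> contains_3241 (theta n p) \<and> \<not> contains_1423 (theta n p)
          \<and> \<not> contains_4132 (theta n p) \<and> \<not> contains_2314 (theta n p)
          \<and> \<not> contains_231_end (theta n p))"
proof (cases "is_cyclic n p")
  case False
  thus ?thesis using theta_noncyc[OF assms(2) assms(1)] by blast
next
  case True
  define f where "f = (\<lambda>k. (p ^^ k) n)"
  have th: "theta n p = map f [0..<n]" using theta_cyc[OF assms(2) assms(1) True] f_def by simp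
  note cfa = cyc_facts[OF assms(2) assms(1) True]
  have inj: "inj_on f {..<n}" using cfa f_def by simp
  have img: "f ` {..<n} = {1..n}" using cfa f_def by simp
  have fn: "f n = n" using cyc_len_pos[OF assms(2), of n] cfa f_def by simp
  have fS: "\<And>k. f (Suc k) = p (f k)" using f_def by simp
  have f0: "f 0 = n" using f_def by simp
  have "theta n p ! 0 = n" using th f0 assms(1) by (simp add: nth_map)
  thus ?thesis using main_cyc[OF assms(2) assms(1) fS f0 fn inj img th] True by simp
qed

end
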